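(* Let $A$ be a finite set of alternatives with $|A|\ge 3$ and let $\mathbb{D}$ be a domain of linear orders over $A$ that is connected with two distinct neighbours. Then $\mathbb{D}$ is connected and satisfies the disagreement property: for any alternatives $a,b$ such that $r_1(P_i)=a$ and $r_1(P_i')=b$ for some adjacent $P_i,P_i'\in\mathbb{D}$, there exist $\bar P_i,\hat P_i\in\mathbb{D}$ with $r_1(\bar P_i),r_1(\hat P_i)\notin\{a,b\}$, $a\,\bar P_i\,b$ and $b\,\hat P_i\,a$.
   Context: A domain is a set $\mathbb{D}$ of linear orders over $A$; $r_k(P_i)$ denotes the $k$-th ranked alternative of $P_i$, and $x\,P_i\,y$ means $P_i$ ranks $x$ above $y$. Two linear orders $P_i,P_i'$ are adjacent if $P_i'$ is obtained from $P_i$ by swapping two consecutively ranked alternatives, leaving all other ranks unchanged. A path in $\mathbb{D}$ is a sequence of distinct preferences in $\mathbb{D}$ with consecutive ones adjacent; $\mathbb{D}$ is connected if any two of its elements are joined by a path in $\mathbb{D}$. For $\bar{\mathbb{D}}\subseteq\mathbb{D}$, a neighbour of $\bar{\mathbb{D}}$ in $\mathbb{D}$ is a $P_i\in\mathbb{D}\setminus\bar{\mathbb{D}}$ adjacent to some element of $\bar{\mathbb{D}}$. $P_i,P_i'\in\mathbb{D}$ are top-connected if some path in $\mathbb{D}$ from $P_i$ to $P_i'$ has all members with the same top alternative; $\mathbb{D}^{TCC}(P_i)$ is the set of elements of $\mathbb{D}$ top-connected to $P_i$, together with $P_i$. $\mathbb{D}$ is connected with two distinct neighbours if it is connected and for every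 $P_i\in\mathbb{D}$ there exist neighbours $P_i',P_i''$ of $\mathbb{D}^{TCC}(P_i)$ in $\mathbb{D}$ with $r_1(P_i')\ne r_1(P_i'')$. *)

theory Defs
  imports Main
begin

text \<open>A linear order over the finite set A of alternatives is represented by the list
  of alternatives from best to worst: a list without repetitions whose set is A.\<close>

definition linear_order_on_list :: "'a set \<Rightarrow> 'a list \<Rightarrow> bool" where
  "linear_order_on_list A P \<longleftrightarrow> distinct P \<and> set P = A"

definition is_domain :: "'a set \<Rightarrow> 'a list set \<Rightarrow> bool" where
  "is_domain A D \<longleftrightarrow> (\<forall>P\<in>D. linear_order_on_list A P)"

text \<open>k-th ranked alternative, k starting from 1.\<close>
definition rk :: "nat \<Rightarrow> 'a list \<Rightarrow> 'a" where
  "rk k P = P ! (k - 1)"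

definition top_alt :: "'a list \<Rightarrow> 'a" where
  "top_alt P = rk 1 P"

definition ranks_above :: "'a list \<Rightarrow> 'a \<Rightarrow> 'a \<Rightarrow> bool" where
  "ranks_above P x y \<longleftrightarrow> (\<exists>i j. i < j \<and> j < length P \<and> P ! i = x \<and> P ! j = y)"

definition adjacent :: "'a list \<Rightarrow> 'a list \<Rightarrow> bool" where
  "adjacent P P' \<longleftrightarrow> length P' = length P \<and>
     (\<exists>k. Suc k < length P \<and> P' ! k = P ! Suc k \<and> P' ! Suc k = P ! k \<and>
        (\<forall>j<length P. j \<noteq> k \<and> j \<noteq> Suc k \<longrightarrow> P' ! j = P ! j))"

definition is_path :: "'a list set \<Rightarrow> 'a list list \<Rightarrow> bool" where
  "is_path D ps \<longleftrightarrow> ps \<noteq> [] \<and> distinct ps \<and> set ps \<subseteq> D \<and>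
     (\<forall>i. Suc i < length ps \<longrightarrow> adjacent (ps ! i) (ps ! Suc i))"

definition connected_domain :: "'a list set \<Rightarrow> bool" where
  "connected_domain D \<longleftrightarrow>
     (\<forall>P\<in>D. \<forall>P'\<in>D. \<exists>ps. is_path D ps \<and> hd ps = P \<and> last ps = P')"

definition neighbour :: "'a list set \<Rightarrow> 'a list set \<Rightarrow> 'a list \<Rightarrow> bool" where
  "neighbour D Dbar P \<longleftrightarrow> P \<in> D - Dbar \<and> (\<exists>Q\<in>Dbar. adjacent Q P)"

definition top_connected :: "'a list set \<Rightarrow> 'a list \<Rightarrow> 'a list \<Rightarrow> bool" where
  "top_connected D P P' \<longleftrightarrow>
     (\<exists>ps. is_path D ps \<and> hd ps = P \<and> last ps = P' \<and> (\<forall>Q\<in>set ps. top_alt Q = top_alt P))"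

definition TCC :: "'a list set \<Rightarrow> 'a list \<Rightarrow> 'a list set" where
  "TCC D P = {P' \<in> D. top_connected D P P'} \<union> {P}"

definition connected_two_neighbours :: "'a list set \<Rightarrow> bool" where
  "connected_two_neighbours D \<longleftrightarrow> connected_domain D \<and>
     (\<forall>P\<in>D. \<exists>P' P''. neighbour D (TCC D P) P' \<and> neighbour D (TCC D P) P'' \<and>
        top_alt P' \<noteq> top_alt P'')"

definition disagreement_property :: "'a list set \<Rightarrow> bool" where
  "disagreement_property D \<longleftrightarrow>
     (\<forall>a b. a \<noteq> b \<and> (\<exists>P\<in>D. \<exists>P'\<in>D. adjacent P P' \<and> top_alt P = a \<and> top_alt P' = b) \<longrightarrow>
        (\<exists>Pbar\<in>D. \<exists>Phat\<in>D. top_alt Pbar \<notin> {a, b} \<and> top_alt Phat \<notin> {a, b} \<and>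
           ranks_above Pbar a b \<and> ranks_above Phat b a))"

end

theory Submission
  imports Defs
begin

lemma tc_path:
  assumes "R \<in> TCC D P" "P \<in> D"
  shows "\<exists>ps. is_path D ps \<and> hd ps = P \<and> last ps = R \<and> (\<forall>Q\<in>set ps. top_alt Q = top_alt P)"
proof (cases "R = P")
  case True
  then show ?thesis using assms(2) by (intro exI[of _ "[P]"]) (auto simp: is_path_def)
next
  case False
  then show ?thesis using assms(1) by (auto simp: TCC_def top_connected_def)
qed

lemma extend_path:
  assumes p: "is_path D ps" "hd ps = P" "last ps = R" "\<forall>X\<in>set ps. top_alt X = top_alt P"
    and Q: "Q \<in> D" "adjacent R Q" "top_alt Q = top_alt P"
  shows "top_connected D P Q"
proof (cases "Q \<in> set ps")
  case True
  then obtain i where i: "i < length ps" "ps ! i = Q" by (auto simp: in_set_conv_nth)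
  define qs where "qs = take (Suc i) ps"
  have ne: "ps \<noteq> []" using p by (auto simp: is_path_def)
  have "is_path D qs" using p(1) i unfolding qs_def is_path_def
    by (auto dest: in_set_takeD)
  moreover have "hd qs = P" using p(2) ne unfolding qs_def by (simp add: hd_take)
  moreover have "last qs = Q" using i unfolding qs_def by (simp add: take_Suc_conv_app_nth)
  moreover have "\<forall>X\<in>set qs. top_alt X = top_alt P" using p(4) unfolding qs_def
    by (auto dest: in_set_takeD)
  ultimately show ?thesis unfolding top_connected_def by blast
next
  case False
  define qs where "qs = ps @ [Q]"
  have ne: "ps \<noteq> []" using p by (auto simp: is_path_def)
  have adj: "adjacent (qs ! j) (qs ! Suc j)" if "Suc j < length qs" for j
  proof (cases "Suc j < length ps")
    case True
    then show ?thesis using p(1) unfolding qs_def is_path_def by (simp add: nth_append)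
  next
    case False
    then have "Suc j = length ps" using that unfolding qs_def by simp
    then have "j = length ps - 1" by simp
    then have "qs ! j = R" "qs ! Suc j = Q" using p(3) ne unfolding qs_def
      by (auto simp: nth_append last_conv_nth)
    then show ?thesis using Q(2) by simp
  qed
  have "is_path D qs" using p(1) False Q(1) adj unfolding qs_def is_path_def by auto
  moreover have "hd qs = P" using p(2) ne unfolding qs_def by simp
  moreover have "last qs = Q" unfolding qs_def by simp
  moreover have "\<forall>X\<in>set qs. top_alt X = top_alt P" using p(4) Q(3) unfolding qs_def by auto
  ultimately show ?thesis unfolding top_connected_def by blast
qed

lemma nb_top:
  assumes "P \<in> D" "neighbour D (TCC D P) Q"
  obtains R where "R \<in> TCC D P" "adjacent R Q" "Q \<in> D" "top_alt R = top_alt P"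
    "top_alt Q \<noteq> top_alt P"
proof -
  from assms(2) obtain R where R: "R \<in> TCC D P" "adjacent R Q" "Q \<in> D" "Q \<notin> TCC D P"
    by (auto simp: neighbour_def)
  from tc_path[OF R(1) assms(1)] obtain ps where
    ps: "is_path D ps" "hd ps = P" "last ps = R" "\<forall>X\<in>set ps. top_alt X = top_alt P" by blast
  have "R \<in> set ps" using ps(1,3) by (auto simp: is_path_def)
  then have tR: "top_alt R = top_alt P" using ps(4) by auto
  have "top_alt Q \<noteq> top_alt P"
  proof
    assume "top_alt Q = top_alt P"
    from extend_path[OF ps R(3) R(2) this] have "top_connected D P Q" .
    then show False using R(3,4) by (auto simp: TCC_def)
  qed
  then show ?thesis using that R tR by blast
qed

lemma swap0:
  assumes "adjacent R Q" "top_alt R \<noteq> top_alt Q"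
  shows "Q ! 0 = R ! 1" "Q ! 1 = R ! 0" "length Q = length R" "length R \<ge> 2"
proof -
  from assms(1) obtain k where k: "length Q = length R" "Suc k < length R" "Q ! k = R ! Suc k"
    "Q ! Suc k = R ! k" "\<forall>j<length R. j \<noteq> k \<and> j \<noteq> Suc k \<longrightarrow> Q ! j = R ! j"
    by (auto simp: adjacent_def)
  have "k = 0"
  proof (rule ccontr)
    assume "k \<noteq> 0"
    then have "Q ! 0 = R ! 0" using k(2) k(5)[rule_format, of 0] by fastforce
    then show False using assms(2) by (simp add: top_alt_def rk_def)
  qed
  then show "Q ! 0 = R ! 1" "Q ! 1 = R ! 0" "length Q = length R" "length R \<ge> 2" using k by auto
qed

lemma key:
  assumes dom: "is_domain A D" and c2: "connected_two_neighbours D"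
    and P: "P \<in> D" "top_alt P = a" and b: "b \<in> A" "a \<noteq> b"
  shows "\<exists>Q\<in>D. top_alt Q \<notin> {a, b} \<and> ranks_above Q a b"
proof -
  from c2 P obtain Q1 Q2 where N: "neighbour D (TCC D P) Q1" "neighbour D (TCC D P) Q2"
    "top_alt Q1 \<noteq> top_alt Q2" by (auto simp: connected_two_neighbours_def)
  have gen: "\<exists>Q\<in>D. top_alt Q \<notin> {a, b} \<and> ranks_above Q a b"
    if nQ: "neighbour D (TCC D P) Q" and nb: "top_alt Q \<noteq> b" for Q
  proof -
    obtain R where R: "adjacent R Q" "Q \<in> D" "top_alt R = a" "top_alt Q \<noteq> a"
    proof -
      from nb_top[OF P(1) nQ] obtain R where "adjacent R Q" "Q \<in> D" "top_alt R = top_alt P" "top_alt Q \<noteq> top_alt P"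
        by blast
      then show ?thesis using that P(2) by simp
    qed
    note that = nQ nb
    have s: "Q ! 0 = R ! 1" "Q ! 1 = R ! 0" "length Q = length R" "length R \<ge> 2"
      using swap0[OF R(1)] R(3,4) by auto
    have "b \<in> set Q" using dom R(2) b by (auto simp: is_domain_def linear_order_on_list_def)
    then obtain j where j: "j < length Q" "Q ! j = b" by (auto simp: in_set_conv_nth)
    have q0: "Q ! 0 \<noteq> b" using that(2) by (simp add: top_alt_def rk_def)
    have q1: "Q ! 1 = a" using s R(3) by (simp add: top_alt_def rk_def)
    have "j \<noteq> 0" using j q0 by (cases j) auto
    moreover have "j \<noteq> 1" using j q1 b(2) by auto
    ultimately have "1 < j" by simp
    then have "ranks_above Q a b" unfolding ranks_above_def using j q1 by blast
    then show ?thesis using R(2,4) that(2) by blast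
  qed
  show ?thesis
  proof (cases "top_alt Q1 = b")
    case True
    then have "top_alt Q2 \<noteq> b" using N(3) by simp
    then show ?thesis using gen N(2) by blast
  next
    case False
    then show ?thesis using gen N(1) by blast
  qed
qed

theorem mainTheorem6:
  fixes A :: "'a set" and D :: "'a list set"
  assumes "finite A" and "card A \<ge> 3"
    and "is_domain A D"
    and "connected_two_neighbours D"
  shows "connected_domain D \<and> disagreement_property D"
proof -
  have "disagreement_property D"
    unfolding disagreement_property_def
  proof (intro allI impI)
    fix a b
    assume h: "a \<noteq> b \<and> (\<exists>P\<in>D. \<exists>P'\<in>D. adjacent P P' \<and> top_alt P = a \<and> top_alt P' = b)"
    then obtain P P' where PP: "P \<in> D" "P' \<in> D" "adjacent P P'" "top_alt P = a" "top_alt P' = b"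
      by blast
    have s: "P' ! 0 = P ! 1" "P' ! 1 = P ! 0" "length P' = length P" "length P \<ge> 2"
      using swap0[OF PP(3)] PP(4,5) h by auto
    have setP: "set P = A" "set P' = A" using assms(3) PP(1,2)
      by (auto simp: is_domain_def linear_order_on_list_def)
    have aA: "a \<in> A" using PP(4) s setP by (auto simp: top_alt_def rk_def intro!: nth_mem)
    have bA: "b \<in> A" using PP(5) s setP by (auto simp: top_alt_def rk_def intro!: nth_mem)
    obtain Q1 where Q1: "Q1 \<in> D" "top_alt Q1 \<notin> {a, b}" "ranks_above Q1 a b"
      using key[OF assms(3,4) PP(1,4) bA] h by blast
    obtain Q2 where Q2: "Q2 \<in> D" "top_alt Q2 \<notin> {b, a}" "ranks_above Q2 b a"
      using key[OF assms(3,4) PP(2,5) aA] h by blast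
    show "\<exists>Pbar\<in>D. \<exists>Phat\<in>D. top_alt Pbar \<notin> {a, b} \<and> top_alt Phat \<notin> {a, b} \<and>
           ranks_above Pbar a b \<and> ranks_above Phat b a"
      using Q1 Q2 by blast
  qed
  then show ?thesis using assms(4) by (simp add: connected_two_neighbours_def)
qed

end
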